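(* Let $(A_n(x))_{n\ge0}$ be the Appell sequence of a complex sequence $(\alpha_n)_{n\ge0}$. The following are equivalent: (i) (R): $A_n(1-x)=(-1)^nA_n(x)$ for all $n\ge0$; (ii) $A_n(1)=(-1)^n\alpha_n$ for all $n\ge0$; (iii) $A_n(\tfrac12)=0$ for all odd $n\ge1$. Moreover, (R) is equivalent to: $A^\star_n(1)=(-1)^n\alpha_n$ for all $n\ge0$ together with $A^\star_n(2)=0$ for all odd $n\ge1$. Finally, (R) implies $\alpha_1=-\tfrac12\alpha_0$.
   Context: Let $(\alpha_n)_{n\ge0}$ be an arbitrary sequence of complex numbers (no assumption $\alpha_0\ne0$). Its Appell polynomials are $A_n(x)=\sum_{\nu=0}^{n}\binom{n}{\nu}\alpha_{n-\nu}x^\nu$ for $n\ge0$, equivalently $\big(\sum_{n\ge0}\alpha_n t^n/n!\big)e^{xt}=\sum_{n\ge0}A_n(x)t^n/n!$. The reciprocal Appell polynomials are $A^\star_n(x)=x^nA_n(x^{-1})=\sum_{\nu=0}^{n}\binom{n}{\nu}\alpha_\nu x^\nu$. *)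

theory Defs
  imports Complex_Main
begin

definition appell :: "(nat \<Rightarrow> complex) \<Rightarrow> nat \<Rightarrow> complex \<Rightarrow> complex" where
  "appell \<alpha> n x = (\<Sum>\<nu>=0..n. of_nat (n choose \<nu>) * \<alpha> (n - \<nu>) * x ^ \<nu>)"

definition appell_star :: "(nat \<Rightarrow> complex) \<Rightarrow> nat \<Rightarrow> complex \<Rightarrow> complex" where
  "appell_star \<alpha> n x = (\<Sum>\<nu>=0..n. of_nat (n choose \<nu>) * \<alpha> \<nu> * x ^ \<nu>)"

definition prop_R :: "(nat \<Rightarrow> complex) \<Rightarrow> bool" where
  "prop_R \<alpha> \<longleftrightarrow> (\<forall>n x. appell \<alpha> n (1 - x) = (-1) ^ n * appell \<alpha> n x)"

end

theory Submission
  imports Defs "HOL-Computational_Algebra.Formal_Power_Series"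
begin

lemma coeff_lemma:
  "fps_nth (fps_exp x * Abs_fps (\<lambda>n. \<alpha> n / fact n)) n = appell \<alpha> n x / fact n"
proof -
  have "fps_nth (fps_exp x * Abs_fps (\<lambda>n. \<alpha> n / fact n)) n
      = (\<Sum>i=0..n. x^i / fact i * (\<alpha> (n-i) / fact (n-i)))"
    by (simp add: fps_mult_nth)
  also have "\<dots> = (\<Sum>i=0..n. of_nat (n choose i) * \<alpha> (n - i) * x ^ i / fact n)"
  proof (rule sum.cong)
    fix i assume "i \<in> {0..n}"
    then have "i \<le> n" by simp
    then show "x^i / fact i * (\<alpha> (n-i) / fact (n-i)) = of_nat (n choose i) * \<alpha> (n - i) * x ^ i / fact n"
      by (simp add: binomial_fact field_simps)
  qed simp
  also have "\<dots> = appell \<alpha> n x / fact n"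
    by (simp add: appell_def sum_divide_distrib)
  finally show ?thesis .
qed

lemma appell_add:
  "appell \<alpha> n (x + y) = (\<Sum>k=0..n. of_nat (n choose k) * y ^ k * appell \<alpha> (n - k) x)"
proof -
  define a where "a = Abs_fps (\<lambda>n. \<alpha> n / fact n)"
  have "fps_exp (x + y) * a = fps_exp y * (fps_exp x * a)"
    by (metis fps_exp_add_mult add.commute mult.assoc)
  then have "fps_nth (fps_exp (x + y) * a) n = fps_nth (fps_exp y * (fps_exp x * a)) n" by (rule arg_cong)
  then have "appell \<alpha> n (x+y) / fact n = (\<Sum>i=0..n. y^i / fact i * (appell \<alpha> (n-i) x / fact (n-i)))"
    unfolding fps_mult_nth[of "fps_exp y"] by (simp add: coeff_lemma a_def)
  also have "\<dots> = (\<Sum>k=0..n. of_nat (n choose k) * y ^ k * appell \<alpha> (n - k) x / fact n)"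
  proof (rule sum.cong)
    fix i assume "i \<in> {0..n}"
    then have "i \<le> n" by simp
    then show "y^i / fact i * (appell \<alpha> (n-i) x / fact (n-i)) = of_nat (n choose i) * y ^ i * appell \<alpha> (n-i) x / fact n"
      by (simp add: binomial_fact field_simps)
  qed simp
  finally show ?thesis by (simp add: sum_divide_distrib[symmetric] field_simps)
qed

lemma appell_0: "appell \<alpha> n 0 = \<alpha> n"
  using coeff_lemma[of 0 \<alpha> n] by (simp add: field_simps)

lemma star_1: "appell_star \<alpha> n 1 = appell \<alpha> n 1"
proof -
  have "appell \<alpha> n 1 = (\<Sum>\<nu>=0..n. of_nat (n choose (n - \<nu>)) * \<alpha> (n - \<nu>))"
    unfolding appell_def by (intro sum.cong) (auto simp: binomial_symmetric[symmetric])
  also have "\<dots> = (\<Sum>\<nu>=0..n. of_nat (n choose \<nu>) * \<alpha> \<nu>)"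
    using sum.atLeastAtMost_rev[of "\<lambda>\<nu>. of_nat (n choose \<nu>) * \<alpha> \<nu>" 0 n] by simp
  finally show ?thesis by (simp add: appell_star_def)
qed

lemma star_2: "appell_star \<alpha> n 2 = 2^n * appell \<alpha> n (1/2)"
proof -
  have "appell \<alpha> n (1/2) = (\<Sum>\<nu>=0..n. of_nat (n choose (n - \<nu>)) * \<alpha> (n - \<nu>) * (1/2)^\<nu>)"
    unfolding appell_def by (intro sum.cong) (auto simp: binomial_symmetric[symmetric])
  also have "\<dots> = (\<Sum>\<nu>=0..n. of_nat (n choose \<nu>) * \<alpha> \<nu> * (1/2)^(n-\<nu>))"
  proof -
    have "(\<Sum>\<nu>=0..n. of_nat (n choose \<nu>) * \<alpha> \<nu> * (1/2::complex)^(n-\<nu>))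
        = (\<Sum>\<nu>=0..n. of_nat (n choose (n-\<nu>)) * \<alpha> (n-\<nu>) * (1/2::complex)^(n-(n-\<nu>)))"
      using sum.atLeastAtMost_rev[of "\<lambda>\<nu>. of_nat (n choose \<nu>) * \<alpha> \<nu> * (1/2::complex)^(n-\<nu>)" 0 n] by simp
    also have "\<dots> = (\<Sum>\<nu>=0..n. of_nat (n choose (n-\<nu>)) * \<alpha> (n-\<nu>) * (1/2::complex)^\<nu>)"
      by (intro sum.cong) auto
    finally show ?thesis by simp
  qed
  finally have "2^n * appell \<alpha> n (1/2) = (\<Sum>\<nu>=0..n. of_nat (n choose \<nu>) * \<alpha> \<nu> * (2^n * (1/2)^(n-\<nu>)))"
    by (simp add: sum_distrib_left mult_ac)
  also have "\<dots> = appell_star \<alpha> n 2"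
    unfolding appell_star_def
  proof (rule sum.cong)
    fix i assume "i \<in> {0..n}"
    then have "(2::complex)^n = 2^i * 2^(n-i)" by (simp add: power_add[symmetric])
    then show "of_nat (n choose i) * \<alpha> i * (2^n * (1/2)^(n-i)) = of_nat (n choose i) * \<alpha> i * 2^i"
      by (simp add: power_one_over)
  qed simp
  finally show ?thesis ..
qed

theorem mainTheorem1:
  fixes \<alpha> :: "nat \<Rightarrow> complex"
  shows "(prop_R \<alpha> \<longleftrightarrow> (\<forall>n. appell \<alpha> n 1 = (-1) ^ n * \<alpha> n))
       \<and> (prop_R \<alpha> \<longleftrightarrow> (\<forall>n. odd n \<longrightarrow> appell \<alpha> n (1/2) = 0))
       \<and> (prop_R \<alpha> \<longleftrightarrow> ((\<forall>n. appell_star \<alpha> n 1 = (-1) ^ n * \<alpha> n)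
                          \<and> (\<forall>n. odd n \<longrightarrow> appell_star \<alpha> n 2 = 0)))
       \<and> (prop_R \<alpha> \<longrightarrow> \<alpha> 1 = - (1/2) * \<alpha> 0)"
proof -
  have RtoII: "prop_R \<alpha> \<Longrightarrow> appell \<alpha> n 1 = (-1) ^ n * \<alpha> n" for n
    unfolding prop_R_def by (metis appell_0 diff_zero)
  have IItoR: "prop_R \<alpha>" if H: "\<forall>n. appell \<alpha> n 1 = (-1) ^ n * \<alpha> n"
    unfolding prop_R_def
  proof (intro allI)
    fix n x
    have "appell \<alpha> n (1 - x) = appell \<alpha> n (1 + (-x))" by simp
    also have "\<dots> = (\<Sum>k=0..n. of_nat (n choose k) * (-x) ^ k * appell \<alpha> (n - k) 1)"
      by (rule appell_add)
    also have "\<dots> = (\<Sum>k=0..n. (-1)^n * (of_nat (n choose k) * \<alpha> (n - k) * x ^ k))"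
    proof (rule sum.cong)
      fix k assume "k \<in> {0..n}"
      then have "(-1::complex)^n = (-1)^k * (-1)^(n-k)" by (simp add: power_add[symmetric])
      then show "of_nat (n choose k) * (-x) ^ k * appell \<alpha> (n - k) 1 = (-1)^n * (of_nat (n choose k) * \<alpha> (n - k) * x ^ k)"
        using H by (simp add: power_minus[of x] mult_ac)
    qed simp
    also have "\<dots> = (-1)^n * appell \<alpha> n x" by (simp add: appell_def sum_distrib_left)
    finally show "appell \<alpha> n (1 - x) = (-1) ^ n * appell \<alpha> n x" .
  qed
  have RtoIII: "prop_R \<alpha> \<Longrightarrow> odd n \<Longrightarrow> appell \<alpha> n (1/2) = 0" for n
  proof -
    assume "prop_R \<alpha>" "odd n"
    then have "appell \<alpha> n (1 - 1/2) = (-1)^n * appell \<alpha> n (1/2)"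
      unfolding prop_R_def by blast
    then have "appell \<alpha> n (1/2) = - appell \<alpha> n (1/2)" using \<open>odd n\<close> by simp
    then show ?thesis by simp
  qed
  have IIItoII: "appell \<alpha> n 1 = (-1) ^ n * \<alpha> n" if H: "\<forall>n. odd n \<longrightarrow> appell \<alpha> n (1/2) = 0" for n
  proof -
    have "appell \<alpha> n 1 = appell \<alpha> n (1/2 + 1/2)" by simp
    also have "\<dots> = (\<Sum>k=0..n. of_nat (n choose k) * (1/2) ^ k * appell \<alpha> (n - k) (1/2))"
      by (rule appell_add)
    also have "\<dots> = (\<Sum>k=0..n. (-1)^n * (of_nat (n choose k) * (-1/2) ^ k * appell \<alpha> (n - k) (1/2)))"
    proof (rule sum.cong)
      fix k assume "k \<in> {0..n}"
      then have e: "(-1::complex)^n = (-1)^k * (-1)^(n-k)" by (simp add: power_add[symmetric])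
      have "(-1/2::complex)^k = (-1)^k * (1/2)^k" by (simp add: power_mult_distrib[symmetric])
      moreover have "(-1)^(n-k) * appell \<alpha> (n - k) (1/2) = appell \<alpha> (n - k) (1/2)"
        using H by (cases "even (n-k)") auto
      ultimately show "of_nat (n choose k) * (1/2) ^ k * appell \<alpha> (n - k) (1/2) = (-1)^n * (of_nat (n choose k) * (-1/2) ^ k * appell \<alpha> (n - k) (1/2))"
        using e by (simp add: mult_ac)
    qed simp
    also have "\<dots> = (-1)^n * appell \<alpha> n (1/2 + (-1/2))"
      by (simp only: appell_add sum_distrib_left)
    also have "\<dots> = (-1)^n * \<alpha> n" by (simp add: appell_0)
    finally show ?thesis .
  qed
  have c1: "prop_R \<alpha> \<longleftrightarrow> (\<forall>n. appell \<alpha> n 1 = (-1) ^ n * \<alpha> n)"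
    using RtoII IItoR by blast
  have c2: "prop_R \<alpha> \<longleftrightarrow> (\<forall>n. odd n \<longrightarrow> appell \<alpha> n (1/2) = 0)"
    using RtoIII IIItoII IItoR by blast
  have c3: "(\<forall>n. odd n \<longrightarrow> appell_star \<alpha> n 2 = 0) \<longleftrightarrow> (\<forall>n. odd n \<longrightarrow> appell \<alpha> n (1/2) = 0)"
    by (simp add: star_2)
  have c4: "prop_R \<alpha> \<longrightarrow> \<alpha> 1 = - (1/2) * \<alpha> 0"
  proof
    assume "prop_R \<alpha>"
    then have "appell \<alpha> 1 1 = - \<alpha> 1" using RtoII[of 1] by simp
    then have "\<alpha> 1 + \<alpha> 0 = - \<alpha> 1" by (simp add: appell_def)
    then have "\<alpha> 0 = -2 * \<alpha> 1" by (simp add: algebra_simps eq_neg_iff_add_eq_0)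
    then show "\<alpha> 1 = - (1/2) * \<alpha> 0" by simp
  qed
  show ?thesis using c1 c2 c3 c4 by (simp add: star_1)
qed

end
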